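(* Let $A$ be $K\{X\}_\infty$ or $K\{X\}$ and let $f\in A^{(n)}$ be homogeneous of degree $n\ge1$. (i) If $f$ is primitive, then $\langle f,g_1\sqcup\!\sqcup g_2\rangle=0$ for all homogeneous $g_1,g_2\in A$ of degree $\ge1$. (ii) If $S$ is a monomial of degree $k$ with $1\le k\le n-1$, then $\partial_S(f)=0$ if and only if $\langle f,S\sqcup\!\sqcup g\rangle=0$ for all $g\in A^{(n-k)}$. (iii) If $f$ is orthogonal to all shuffle products $S\sqcup\!\sqcup T$ with $S,T$ monomials of degrees $k$ and $n-k$, $1\le k<\frac{n+1}{2}$, then $f$ is primitive.
   Context: $K$ is a field of characteristic $0$, $X=\{x_1,x_2,\dots\}$ a finite or countable set of variables. A planar rooted tree is reduced if no vertex has exactly one incoming edge. $K\{X\}_\infty$ has basis the monomials: the empty tree $1$ and all planar reduced rooted trees with leaves labelled by elements of $X$, graded by number of leaves ($A^{(n)}$); for $k\ge2$, $\vee^k$ grafts $k$ nonempty trees (in order) onto a new root, extended multilinearly, with unit conventions (arguments $1$ omitted, $\vee^1=\mathrm{id}$, $\vee^k(1,\dots,1)=1$). $K\{X\}$ is the span of $1$ and the binary monomials. $A\otimes A$ carries the operations componentwise, the co-addition $\Delta_a$ is the unique unital homomorphism with $\Delta_a(x_i)=x_i\otimes1+1\otimes x_i$, and $f$ is primitive if $\Delta_a(f)=f\otimes1+1\otimes f$. $\langle\,,\rangle$ is the bilinear form on $A$ making monomials orthonormal, extended factorwise to $A\otimes A$; $\sqcup\!\sqcup$ is defined by $\langle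 g_1\sqcup\!\sqcup g_2,h\rangle=\langle g_1\otimes g_2,\Delta_a(h)\rangle$ for all $h\in A$. For a monomial $T$ of $A$, $\partial_T:A\to A$ is defined by $\Delta_a(f)=\sum_T T\otimes\partial_T(f)$ (sum over monomials of $A$). *)

theory Defs
  imports Main "HOL-Library.Poly_Mapping" "HOL-Library.Countable"
begin

datatype 'x ptree = Leaf 'x | Node "'x ptree list"

text \<open>Monomials: None is the empty tree 1, Some t is a nonempty tree t.\<close>
type_synonym 'x mono = "'x ptree option"

primrec reduced :: "'x ptree \<Rightarrow> bool" where
  "reduced (Leaf x) = True"
| "reduced (Node ts) = (2 \<le> length ts \<and> list_all reduced ts)"

primrec binary :: "'x ptree \<Rightarrow> bool" where
  "binary (Leaf x) = True"
| "binary (Node ts) = (length ts = 2 \<and> list_all binary ts)"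

primrec nleaves :: "'x ptree \<Rightarrow> nat" where
  "nleaves (Leaf x) = 1"
| "nleaves (Node ts) = sum_list (map nleaves ts)"

definition mdeg :: "'x mono \<Rightarrow> nat" where
  "mdeg m = (case m of None \<Rightarrow> 0 | Some t \<Rightarrow> nleaves t)"

text \<open>Monomials of A: bin = False gives K{X}_inf (reduced trees),
  bin = True gives K{X} (binary trees).\<close>
definition Amonos :: "bool \<Rightarrow> 'x mono set" where
  "Amonos bin = {None} \<union> {Some t | t. if bin then binary t else reduced t}"

definition homog :: "bool \<Rightarrow> nat \<Rightarrow> ('x mono \<Rightarrow>\<^sub>0 'k::zero) \<Rightarrow> bool" where
  "homog bin n f = (\<forall>m\<in>Poly_Mapping.keys f. m \<in> Amonos bin \<and> mdeg m = n)"

text \<open>Grafting of monomials with the unit conventions: arguments 1 are omitted,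
  vee^1 = id, vee^k(1,...,1) = 1.\<close>
definition graft :: "'x mono list \<Rightarrow> 'x mono" where
  "graft ms = (case List.map the (filter (\<lambda>m. m \<noteq> None) ms) of
      [] \<Rightarrow> None | [t] \<Rightarrow> Some t | ts \<Rightarrow> Some (Node ts))"

definition smul :: "'k::semiring_0 \<Rightarrow> ('a \<Rightarrow>\<^sub>0 'k) \<Rightarrow> ('a \<Rightarrow>\<^sub>0 'k)" where
  "smul c f = Poly_Mapping.map ((*) c) f"

text \<open>Multilinear expansion of a list of tensors into a linear combination of
  pairs of monomial lists.\<close>
primrec expand :: "(('x mono \<times> 'x mono) \<Rightarrow>\<^sub>0 'k::comm_semiring_1) list
      \<Rightarrow> ('x mono list \<times> 'x mono list) \<Rightarrow>\<^sub>0 'k" where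
  "expand [] = Poly_Mapping.single ([], []) 1"
| "expand (f # fs) = (\<Sum>p\<in>Poly_Mapping.keys f. \<Sum>q\<in>Poly_Mapping.keys (expand fs).
      Poly_Mapping.single (fst p # fst q, snd p # snd q) (Poly_Mapping.lookup f p * Poly_Mapping.lookup (expand fs) q))"

definition graft_tensor :: "(('x mono \<times> 'x mono) \<Rightarrow>\<^sub>0 'k::comm_semiring_1) list
      \<Rightarrow> ('x mono \<times> 'x mono) \<Rightarrow>\<^sub>0 'k" where
  "graft_tensor fs = (\<Sum>q\<in>Poly_Mapping.keys (expand fs).
      Poly_Mapping.single (graft (fst q), graft (snd q)) (Poly_Mapping.lookup (expand fs) q))"

text \<open>Co-addition on nonempty trees: the unital homomorphism with
  Delta(x) = x (x) 1 + 1 (x) x.\<close>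
primrec delta :: "'x ptree \<Rightarrow> ('x mono \<times> 'x mono) \<Rightarrow>\<^sub>0 'k::comm_semiring_1" where
  "delta (Leaf x) = Poly_Mapping.single (Some (Leaf x), None) 1
                   + Poly_Mapping.single (None, Some (Leaf x)) 1"
| "delta (Node ts) = graft_tensor (List.map delta ts)"

definition delta_mono :: "'x mono \<Rightarrow> ('x mono \<times> 'x mono) \<Rightarrow>\<^sub>0 'k::comm_semiring_1" where
  "delta_mono m = (case m of None \<Rightarrow> Poly_Mapping.single (None, None) 1 | Some t \<Rightarrow> delta t)"

definition Delta :: "('x mono \<Rightarrow>\<^sub>0 'k::comm_semiring_1) \<Rightarrow> ('x mono \<times> 'x mono) \<Rightarrow>\<^sub>0 'k" where
  "Delta f = (\<Sum>m\<in>Poly_Mapping.keys f. smul (Poly_Mapping.lookup f m) (delta_mono m))"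

definition tensor :: "('a \<Rightarrow>\<^sub>0 'k::comm_semiring_1) \<Rightarrow> ('a \<Rightarrow>\<^sub>0 'k) \<Rightarrow> ('a \<times> 'a) \<Rightarrow>\<^sub>0 'k" where
  "tensor g h = (\<Sum>p\<in>Poly_Mapping.keys g. \<Sum>q\<in>Poly_Mapping.keys h. Poly_Mapping.single (p, q) (Poly_Mapping.lookup g p * Poly_Mapping.lookup h q))"

abbreviation one_el :: "'x mono \<Rightarrow>\<^sub>0 'k::comm_semiring_1" where
  "one_el \<equiv> Poly_Mapping.single None 1"

definition primitive :: "('x mono \<Rightarrow>\<^sub>0 'k::comm_semiring_1) \<Rightarrow> bool" where
  "primitive f = (Delta f = tensor f one_el + tensor one_el f)"

definition pairing :: "('a \<Rightarrow>\<^sub>0 'k::comm_semiring_1) \<Rightarrow> ('a \<Rightarrow>\<^sub>0 'k) \<Rightarrow> 'k" where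
  "pairing f g = (\<Sum>m\<in>Poly_Mapping.keys f. Poly_Mapping.lookup f m * Poly_Mapping.lookup g m)"

definition shuffle :: "bool \<Rightarrow> ('x mono \<Rightarrow>\<^sub>0 'k::comm_semiring_1) \<Rightarrow> ('x mono \<Rightarrow>\<^sub>0 'k)
      \<Rightarrow> 'x mono \<Rightarrow>\<^sub>0 'k" where
  "shuffle bin g1 g2 = Abs_poly_mapping (\<lambda>h. if h \<in> Amonos bin
      then pairing (tensor g1 g2) (Delta (Poly_Mapping.single h 1)) else 0)"

definition dpartial :: "'x mono \<Rightarrow> ('x mono \<Rightarrow>\<^sub>0 'k::comm_semiring_1) \<Rightarrow> 'x mono \<Rightarrow>\<^sub>0 'k" where
  "dpartial T f = Abs_poly_mapping (\<lambda>U. Poly_Mapping.lookup (Delta f) (T, U))"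

end

theory Submission
  imports Defs
begin

lemma lookup_smul[simp]: "Poly_Mapping.lookup (smul c f) k = c * Poly_Mapping.lookup f k"
  unfolding smul_def by (simp add: Poly_Mapping.map.rep_eq when_def)

lemma Delta_lookup: "Poly_Mapping.lookup (Delta f) p =
   (\<Sum>m\<in>Poly_Mapping.keys f. Poly_Mapping.lookup f m * Poly_Mapping.lookup (delta_mono m) p)"
  unfolding Delta_def by (simp add: lookup_sum)

lemma Delta_single1: "Delta (Poly_Mapping.single h (1::'k::comm_semiring_1)) = delta_mono h"
  by (rule poly_mapping_eqI) (simp add: Delta_lookup)

lemma tensor_lookup: "Poly_Mapping.lookup (tensor g h) (p, q) = Poly_Mapping.lookup g p * Poly_Mapping.lookup h q"
proof -
  have "Poly_Mapping.lookup (tensor g h) (p, q) =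
     (\<Sum>p'\<in>Poly_Mapping.keys g. if p' = p then (\<Sum>q'\<in>Poly_Mapping.keys h. if q' = q then Poly_Mapping.lookup g p' * Poly_Mapping.lookup h q' else 0) else 0)"
    unfolding tensor_def lookup_sum lookup_single when_def
    by (intro sum.cong refl) auto
  also have "\<dots> = Poly_Mapping.lookup g p * Poly_Mapping.lookup h q"
    unfolding sum.delta[OF finite_keys] by (auto simp: in_keys_iff)
  finally show ?thesis .
qed

lemma keys_tensor: "Poly_Mapping.keys (tensor g h) \<subseteq> Poly_Mapping.keys g \<times> Poly_Mapping.keys h"
  by (auto simp: in_keys_iff tensor_lookup)

lemma pairing_superset:
  assumes "finite A" "Poly_Mapping.keys f \<subseteq> A"
  shows "pairing f g = (\<Sum>m\<in>A. Poly_Mapping.lookup f m * Poly_Mapping.lookup g m)"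
  unfolding pairing_def using assms
  by (intro sum.mono_neutral_left) (auto simp: in_keys_iff)

lemma pairing_tensor: "pairing (tensor g1 g2) X =
  (\<Sum>p\<in>Poly_Mapping.keys g1. \<Sum>q\<in>Poly_Mapping.keys g2.
      Poly_Mapping.lookup g1 p * Poly_Mapping.lookup g2 q * Poly_Mapping.lookup X (p, q))"
  by (subst pairing_superset[OF _ keys_tensor]) (auto simp: sum.cartesian_product tensor_lookup intro!: sum.cong)

lemma dsum:
  assumes "finite A" "finite B" "\<And>p q. P p q \<longleftrightarrow> p = p0 \<and> q = q0"
  shows "(\<Sum>p\<in>A. \<Sum>q\<in>B. if P p q then c p q else 0) = (if p0 \<in> A \<and> q0 \<in> B then c p0 q0 else 0)"
proof -
  have "(\<Sum>p\<in>A. \<Sum>q\<in>B. if P p q then c p q else 0) = (\<Sum>p\<in>A. if p = p0 then (if q0 \<in> B then c p0 q0 else 0) else 0)"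
    using assms by (intro sum.cong refl) (auto simp: sum.delta)
  then show ?thesis using assms by (simp add: sum.delta)
qed

fun pe :: "(('a \<times> 'a) \<Rightarrow>\<^sub>0 'k::comm_semiring_1) list \<Rightarrow> 'a list \<Rightarrow> 'a list \<Rightarrow> 'k" where
  "pe [] [] [] = 1"
| "pe (f # fs) (a # as) (b # bs) = Poly_Mapping.lookup f (a, b) * pe fs as bs"
| "pe _ _ _ = 0"

lemma expand_lookup: "Poly_Mapping.lookup (expand fs) (as, bs) = pe fs as bs"
proof (induction fs arbitrary: as bs)
  case Nil
  then show ?case by (cases as; cases bs) (auto simp: lookup_single when_def)
next
  case (Cons f fs)
  show ?case
  proof (cases "\<exists>a as' b bs'. as = a # as' \<and> bs = b # bs'")
    case True
    then obtain a as' b bs' where e: "as = a # as'" "bs = b # bs'" by blast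
    have "Poly_Mapping.lookup (expand (f # fs)) (as, bs) =
     (\<Sum>p\<in>Poly_Mapping.keys f. \<Sum>q\<in>Poly_Mapping.keys (expand fs). if (fst p # fst q, snd p # snd q) = (as, bs) then Poly_Mapping.lookup f p * Poly_Mapping.lookup (expand fs) q else 0)"
      unfolding expand.simps lookup_sum lookup_single when_def by simp
    also have "\<dots> = (if (a,b) \<in> Poly_Mapping.keys f \<and> (as', bs') \<in> Poly_Mapping.keys (expand fs) then Poly_Mapping.lookup f (a, b) * Poly_Mapping.lookup (expand fs) (as', bs') else 0)"
      by (rule dsum) (auto simp: e)
    also have "\<dots> = Poly_Mapping.lookup f (a, b) * Poly_Mapping.lookup (expand fs) (as', bs')"
      by (auto simp: in_keys_iff)
    finally show ?thesis using Cons e by simp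
  next
    case False
    have "Poly_Mapping.lookup (expand (f # fs)) (as, bs) = 0"
      unfolding expand.simps lookup_sum lookup_single when_def
      using False by (auto intro!: sum.neutral)
    moreover have "pe (f # fs) as bs = 0" using False
      by (cases as; cases bs) auto
    ultimately show ?thesis by simp
  qed
qed

lemma pe_prod: "pe fs as bs = (if length as = length fs \<and> length bs = length fs
   then (\<Prod>i<length fs. Poly_Mapping.lookup (fs ! i) (as ! i, bs ! i)) else 0)"
  by (induction fs as bs rule: pe.induct) (auto simp: prod.lessThan_Suc_shift simp del: prod.lessThan_Suc)

lemma expand_prod: "Poly_Mapping.lookup (expand fs) (as, bs) = (if length as = length fs \<and> length bs = length fs
   then (\<Prod>i<length fs. Poly_Mapping.lookup (fs ! i) (as ! i, bs ! i)) else 0)"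
  by (simp add: expand_lookup pe_prod)

lemma expand_keys:
  assumes "(as, bs) \<in> Poly_Mapping.keys (expand fs)"
  shows "length as = length fs" "length bs = length fs"
    "\<And>i. i < length fs \<Longrightarrow> (as ! i, bs ! i) \<in> Poly_Mapping.keys (fs ! i)"
  using assms by (auto simp: in_keys_iff expand_prod split: if_splits)
    (metis (no_types, lifting) finite_lessThan lessThan_iff prod_zero)

lemma graft_tensor_lookup: "Poly_Mapping.lookup (graft_tensor fs) (a, b) =
  (\<Sum>q\<in>{q\<in>Poly_Mapping.keys (expand fs). graft (fst q) = a \<and> graft (snd q) = b}. Poly_Mapping.lookup (expand fs) q)"
  unfolding graft_tensor_def lookup_sum lookup_single when_def
  by (simp add: sum.inter_filter[symmetric] if_distrib cong: if_cong)

definition mk :: "'x ptree list \<Rightarrow> 'x mono" where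
  "mk ts = (case ts of [] \<Rightarrow> None | [t] \<Rightarrow> Some t | ts \<Rightarrow> Some (Node ts))"

lemma mk_cases: "ts = [] \<and> mk ts = None \<or> (\<exists>t. ts = [t] \<and> mk ts = Some t) \<or> (2 \<le> length ts \<and> mk ts = Some (Node ts))"
  unfolding mk_def by (cases ts rule: remdups_adj.cases) auto

abbreviation nn :: "'x mono list \<Rightarrow> 'x ptree list" where
  "nn ms \<equiv> List.map the (filter (\<lambda>m. m \<noteq> None) ms)"

lemma graft_mk: "graft ms = mk (nn ms)"
  unfolding graft_def mk_def ..

primrec labels :: "'x ptree \<Rightarrow> 'x set" where
  "labels (Leaf x) = {x}"
| "labels (Node ts) = \<Union> (set (List.map labels ts))"

definition mlabels :: "'x mono \<Rightarrow> 'x set" where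
  "mlabels m = (case m of None \<Rightarrow> {} | Some t \<Rightarrow> labels t)"

lemma finite_labels: "finite (labels t)"
  by (induction t) auto

lemma finite_mlabels: "finite (mlabels m)"
  by (auto simp: mlabels_def finite_labels split: option.splits)

lemma nn_set: "set (nn ms) = {t. Some t \<in> set ms}"
  by force

lemma nn_length: "length (nn ms) \<le> length ms"
  by simp

lemma nn_deg: "sum_list (List.map nleaves (nn ms)) = sum_list (List.map mdeg ms)"
  by (induction ms) (auto simp: mdeg_def)

lemma nn_labels: "\<Union> (set (List.map labels (nn ms))) = \<Union> (set (List.map mlabels ms))"
  by (induction ms) (auto simp: mlabels_def)

lemma mdeg_mk: "mdeg (mk ts) = sum_list (List.map nleaves ts)"
  using mk_cases[of ts] by (auto simp: mdeg_def)

lemma mlabels_mk: "mlabels (mk ts) = \<Union> (set (List.map labels ts))"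
  using mk_cases[of ts] by (auto simp: mlabels_def)

lemma mdeg_graft: "mdeg (graft ms) = sum_list (List.map mdeg ms)"
  unfolding graft_mk mdeg_mk nn_deg ..

lemma mlabels_graft: "mlabels (graft ms) = \<Union> (set (List.map mlabels ms))"
  unfolding graft_mk mlabels_mk nn_labels ..

lemma graft_None_iff: "graft ms = None \<longleftrightarrow> (\<forall>m\<in>set ms. m = None)"
proof -
  have "nn ms = [] \<longleftrightarrow> (\<forall>m\<in>set ms. m = None)" by (auto simp: filter_empty_conv)
  then show ?thesis using mk_cases[of "nn ms"] unfolding graft_mk by auto
qed

lemma graft_Some: "2 \<le> length ts \<Longrightarrow> graft (List.map Some ts) = Some (Node ts)"
  unfolding graft_mk using mk_cases[of ts] by (auto simp: comp_def)

lemma binary_reduced: "binary t \<Longrightarrow> reduced t"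
  by (induction t) (auto simp: list_all_iff)

lemma Amonos_iff: "m \<in> Amonos bin \<longleftrightarrow> (\<forall>t. m = Some t \<longrightarrow> (if bin then binary t else reduced t))"
  unfolding Amonos_def by (cases m) auto

lemma mk_Amonos:
  assumes "\<forall>t\<in>set ts. if bin then binary t else reduced t" "bin \<Longrightarrow> length ts \<le> 2"
  shows "mk ts \<in> Amonos bin"
  using mk_cases[of ts] assms unfolding Amonos_iff
  by (cases bin) (auto simp: list_all_iff)

lemma graft_Amonos:
  assumes "\<forall>m\<in>set ms. m \<in> Amonos bin" "bin \<Longrightarrow> length ms = 2"
  shows "graft ms \<in> Amonos bin"
proof -
  have all: "\<forall>t\<in>set (nn ms). if bin then binary t else reduced t"
    using assms(1) unfolding nn_set Amonos_iff by auto
  have "length (nn ms) \<le> length ms" by (rule nn_length)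
  then show ?thesis unfolding graft_mk using assms(2) by (intro mk_Amonos[OF all]) auto
qed

lemma sum_list_map_nth: "sum_list (List.map g xs) = (\<Sum>i<length xs. g (xs ! i))"
  by (simp add: sum_list_sum_nth atLeast0LessThan)

lemma Union_map_nth: "\<Union> (set (List.map g xs)) = (\<Union>i<length xs. g (xs ! i))"
  by (auto simp: in_set_conv_nth intro!: bexI[OF _ nth_mem])

lemma delta_Node_nz:
  assumes "Poly_Mapping.lookup (delta (Node ts) :: _ \<Rightarrow>\<^sub>0 'k::comm_semiring_1) (a, b) \<noteq> 0"
  obtains as bs where "(as, bs) \<in> Poly_Mapping.keys (expand (List.map delta ts) :: _ \<Rightarrow>\<^sub>0 'k)" "graft as = a" "graft bs = b"
proof -
  obtain q where "q \<in> {q\<in>Poly_Mapping.keys (expand (List.map delta ts) :: _ \<Rightarrow>\<^sub>0 'k). graft (fst q) = a \<and> graft (snd q) = b}"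
    by (rule sum.not_neutral_contains_not_neutral[OF assms[unfolded delta.simps graft_tensor_lookup]]) simp
  then show ?thesis using that by (cases q) auto
qed

lemma delta_keys:
  assumes "if bin then binary t else reduced t" "(a, b) \<in> Poly_Mapping.keys (delta t :: _ \<Rightarrow>\<^sub>0 'k::comm_semiring_1)"
  shows "a \<in> Amonos bin \<and> b \<in> Amonos bin \<and> mdeg a + mdeg b = nleaves t \<and> mlabels a \<union> mlabels b = labels t"
  using assms
proof (induction t arbitrary: a b)
  case (Leaf x)
  then show ?case
    by (auto simp: in_keys_iff lookup_add lookup_single when_def Amonos_def mdeg_def mlabels_def split: if_splits)
next
  case (Node ts)
  from Node.prems(2) have "Poly_Mapping.lookup (delta (Node ts) :: _ \<Rightarrow>\<^sub>0 'k) (a, b) \<noteq> 0" by (simp add: in_keys_iff)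
  then obtain as bs where q: "(as, bs) \<in> Poly_Mapping.keys (expand (List.map delta ts) :: _ \<Rightarrow>\<^sub>0 'k)" "graft as = a" "graft bs = b"
    by (rule delta_Node_nz)
  have len: "length as = length ts" "length bs = length ts" using expand_keys(1,2)[OF q(1)] by auto
  have IH: "\<forall>i<length ts. as!i \<in> Amonos bin \<and> bs!i \<in> Amonos bin \<and> mdeg (as!i) + mdeg (bs!i) = nleaves (ts!i)
     \<and> mlabels (as!i) \<union> mlabels (bs!i) = labels (ts!i)"
  proof (intro allI impI)
    fix i assume i: "i < length ts"
    have P: "if bin then binary (ts!i) else reduced (ts!i)" using Node.prems(1) i
      by (cases bin) (auto simp: list_all_iff)
    have "(as!i, bs!i) \<in> Poly_Mapping.keys (delta (ts!i) :: _ \<Rightarrow>\<^sub>0 'k)" using expand_keys(3)[OF q(1)] i by simp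
    then show "as!i \<in> Amonos bin \<and> bs!i \<in> Amonos bin \<and> mdeg (as!i) + mdeg (bs!i) = nleaves (ts!i)
     \<and> mlabels (as!i) \<union> mlabels (bs!i) = labels (ts!i)" using Node.IH[OF nth_mem[OF i] P] by blast
  qed
  have binlen: "bin \<Longrightarrow> length ts = 2" using Node.prems(1) by auto
  have A: "a \<in> Amonos bin" unfolding q(2)[symmetric] using IH len binlen
    by (intro graft_Amonos) (auto simp: in_set_conv_nth)
  have B: "b \<in> Amonos bin" unfolding q(3)[symmetric] using IH len binlen
    by (intro graft_Amonos) (auto simp: in_set_conv_nth)
  have "mdeg a + mdeg b = (\<Sum>i<length ts. mdeg (as!i)) + (\<Sum>i<length ts. mdeg (bs!i))"
    unfolding q(2,3)[symmetric] mdeg_graft sum_list_map_nth using len by simp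
  also have "\<dots> = (\<Sum>i<length ts. nleaves (ts!i))" using IH by (simp add: sum.distrib[symmetric])
  also have "\<dots> = nleaves (Node ts)" by (simp add: sum_list_map_nth)
  finally have D: "mdeg a + mdeg b = nleaves (Node ts)" .
  have "mlabels a \<union> mlabels b = (\<Union>i<length ts. mlabels (as!i)) \<union> (\<Union>i<length ts. mlabels (bs!i))"
    unfolding q(2,3)[symmetric] mlabels_graft Union_map_nth using len by simp
  also have "\<dots> = (\<Union>i<length ts. labels (ts!i))" using IH by auto
  also have "\<dots> = labels (Node ts)" unfolding labels.simps Union_map_nth ..
  finally show ?case using A B D by blast
qed

lemma delta_swap: "Poly_Mapping.lookup (delta t :: _ \<Rightarrow>\<^sub>0 'k::comm_semiring_1) (a, b) = Poly_Mapping.lookup (delta t) (b, a)"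
proof (induction t arbitrary: a b)
  case (Leaf x)
  then show ?case by (auto simp: lookup_add lookup_single when_def)
next
  case (Node ts)
  let ?E = "expand (List.map delta ts) :: _ \<Rightarrow>\<^sub>0 'k"
  have Esym: "Poly_Mapping.lookup ?E (prod.swap q) = Poly_Mapping.lookup ?E q" for q
  proof (cases q)
    case (Pair as bs)
    have "\<And>i. i < length ts \<Longrightarrow> Poly_Mapping.lookup (delta (ts!i) :: _ \<Rightarrow>\<^sub>0 'k) (bs!i, as!i) = Poly_Mapping.lookup (delta (ts!i)) (as!i, bs!i)"
      by (rule Node.IH) simp
    then show ?thesis unfolding Pair by (auto simp: expand_prod intro!: prod.cong)
  qed
  show ?case unfolding delta.simps graft_tensor_lookup
    by (rule sum.reindex_bij_witness[of _ prod.swap prod.swap]) (auto simp: in_keys_iff Esym)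
qed

lemma delta_counit:
  "reduced t \<Longrightarrow> Poly_Mapping.lookup (delta t :: _ \<Rightarrow>\<^sub>0 'k::comm_semiring_1) (a, None) = (if a = Some t then 1 else 0)"
proof (induction t arbitrary: a)
  case (Leaf x)
  then show ?case by (auto simp: lookup_add lookup_single when_def)
next
  case (Node ts)
  let ?E = "expand (List.map delta ts) :: _ \<Rightarrow>\<^sub>0 'k"
  let ?q0 = "(List.map Some ts, replicate (length ts) (None :: 'a mono))"
  have IH: "Poly_Mapping.lookup (delta (ts!i) :: _ \<Rightarrow>\<^sub>0 'k) (b, None) = (if b = Some (ts!i) then 1 else 0)"
    if i: "i < length ts" for i b
  proof -
    have m: "ts!i \<in> set ts" using i by simp
    have r: "reduced (ts!i)" using Node.prems i by (simp add: list_all_iff)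
    show ?thesis by (rule Node.IH[OF m r])
  qed
  have E0: "Poly_Mapping.lookup ?E ?q0 = 1"
    by (simp add: expand_prod IH)
  have len2: "2 \<le> length ts" using Node.prems by simp
  have Q: "{q\<in>Poly_Mapping.keys ?E. graft (fst q) = a \<and> graft (snd q) = None} = (if a = Some (Node ts) then {?q0} else {})"
  proof (rule set_eqI)
    fix q
    show "q \<in> {q\<in>Poly_Mapping.keys ?E. graft (fst q) = a \<and> graft (snd q) = None} \<longleftrightarrow> q \<in> (if a = Some (Node ts) then {?q0} else {})"
    proof
      assume "q \<in> {q\<in>Poly_Mapping.keys ?E. graft (fst q) = a \<and> graft (snd q) = None}"
      then obtain as bs where q: "q = (as, bs)" "(as, bs) \<in> Poly_Mapping.keys ?E" "graft as = a" "graft bs = None"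
        by (cases q) auto
      have len: "length as = length ts" "length bs = length ts" using expand_keys(1,2)[OF q(2)] by auto
      have bsN: "\<forall>i<length ts. bs!i = None"
      proof (intro allI impI)
        fix i assume "i < length ts"
        then have "bs!i \<in> set bs" using len by simp
        then show "bs!i = None" using q(4) unfolding graft_None_iff by blast
      qed
      have "\<forall>i<length ts. as!i = Some (ts!i)"
      proof (intro allI impI)
        fix i assume i: "i < length ts"
        have "(as!i, bs!i) \<in> Poly_Mapping.keys (delta (ts!i) :: _ \<Rightarrow>\<^sub>0 'k)" using expand_keys(3)[OF q(2)] i by simp
        then show "as!i = Some (ts!i)" using IH[OF i, of "as!i"] bsN i by (auto simp: in_keys_iff split: if_splits)
      qed
      then have "as = List.map Some ts" "bs = replicate (length ts) None" using len bsN
        by (auto intro!: nth_equalityI)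
      then show "q \<in> (if a = Some (Node ts) then {?q0} else {})" using q graft_Some[OF len2] by auto
    next
      assume "q \<in> (if a = Some (Node ts) then {?q0} else {})"
      then show "q \<in> {q\<in>Poly_Mapping.keys ?E. graft (fst q) = a \<and> graft (snd q) = None}"
        using E0 graft_Some[OF len2] by (auto simp: in_keys_iff graft_None_iff split: if_splits)
    qed
  qed
  show ?case unfolding delta.simps graft_tensor_lookup Q using E0 by auto
qed

lemma nleaves_pos: "reduced t \<Longrightarrow> 1 \<le> nleaves t"
proof (induction t)
  case (Leaf x)
  then show ?case by simp
next
  case (Node ts)
  then have "ts \<noteq> []" by auto
  then obtain t0 where t0: "t0 \<in> set ts" by (cases ts) auto
  have "1 \<le> nleaves t0" using Node t0 by (auto simp: list_all_iff)
  also have "\<dots> \<le> sum_list (List.map nleaves ts)" using t0 by (intro member_le_sum_list) auto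
  finally show ?case by simp
qed

lemma Node_child_le:
  assumes "reduced (Node ts)" "c \<in> set ts"
  shows "nleaves c < nleaves (Node ts)"
proof -
  have len: "length (remove1 c ts) \<ge> 1" using assms by (auto simp: length_remove1)
  then obtain d where d: "d \<in> set (remove1 c ts)" by (cases "remove1 c ts") auto
  have "d \<in> set ts" using d by (meson notin_set_remove1)
  then have "1 \<le> nleaves d" using assms nleaves_pos by (auto simp: list_all_iff)
  also have "\<dots> \<le> sum_list (List.map nleaves (remove1 c ts))" using d by (intro member_le_sum_list) auto
  finally have "1 \<le> sum_list (List.map nleaves (remove1 c ts))" .
  moreover have "sum_list (List.map nleaves ts) = nleaves c + sum_list (List.map nleaves (remove1 c ts))"
    using assms(2) by (rule sum_list_map_remove1)
  ultimately show ?thesis by simp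
qed

lemma Node_length_le:
  assumes "reduced (Node ts)"
  shows "length ts \<le> nleaves (Node ts)"
proof -
  have "length ts = sum_list (List.map (\<lambda>_. 1::nat) ts)" by (simp add: sum_list_triv)
  also have "\<dots> \<le> sum_list (List.map nleaves ts)"
    using assms nleaves_pos by (intro sum_list_mono) (auto simp: list_all_iff)
  finally show ?thesis by simp
qed

lemma finite_trees: "finite L \<Longrightarrow> finite {t. reduced t \<and> nleaves t \<le> N \<and> labels t \<subseteq> L}"
proof (induction N)
  case 0
  have e: "{t. reduced t \<and> nleaves t \<le> 0 \<and> labels t \<subseteq> L} = {}" by (auto dest!: nleaves_pos)
  show ?case unfolding e by (rule finite.emptyI)
next
  case (Suc N)
  let ?R = "{t. reduced t \<and> nleaves t \<le> N \<and> labels t \<subseteq> L}"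
  have sub: "{t. reduced t \<and> nleaves t \<le> Suc N \<and> labels t \<subseteq> L} \<subseteq>
      Leaf ` L \<union> Node ` {ts. set ts \<subseteq> ?R \<and> length ts \<le> Suc N}"
  proof
    fix t assume t: "t \<in> {t. reduced t \<and> nleaves t \<le> Suc N \<and> labels t \<subseteq> L}"
    show "t \<in> Leaf ` L \<union> Node ` {ts. set ts \<subseteq> ?R \<and> length ts \<le> Suc N}"
    proof (cases t)
      case (Leaf x)
      then show ?thesis using t by auto
    next
      case (Node ts)
      have "set ts \<subseteq> ?R"
      proof
        fix c assume c: "c \<in> set ts"
        have "nleaves c < nleaves (Node ts)" using t Node c by (intro Node_child_le) auto
        then show "c \<in> ?R" using t Node c by (auto simp: list_all_iff)
      qed
      moreover have "length ts \<le> Suc N" using Node_length_le[of ts] t Node by auto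
      ultimately show ?thesis using Node by auto
    qed
  qed
  have "finite (Leaf ` L \<union> Node ` {ts. set ts \<subseteq> ?R \<and> length ts \<le> Suc N})"
    using Suc by (intro finite_UnI finite_imageI finite_lists_length_le) auto
  then show ?case using sub by (rule finite_subset[rotated])
qed

lemma Amonos_reduced: "Some t \<in> Amonos bin \<Longrightarrow> reduced t"
  unfolding Amonos_iff by (cases bin) (auto intro: binary_reduced)

lemma shuffle_lookup:
  fixes g1 g2 :: "'x mono \<Rightarrow>\<^sub>0 'k::comm_semiring_1"
  shows "Poly_Mapping.lookup (shuffle bin g1 g2) h = (if h \<in> Amonos bin then
    (\<Sum>p\<in>Poly_Mapping.keys g1. \<Sum>q\<in>Poly_Mapping.keys g2.
      Poly_Mapping.lookup g1 p * Poly_Mapping.lookup g2 q * Poly_Mapping.lookup (delta_mono h) (p, q)) else 0)"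
proof -
  define F where "F h = (if h \<in> Amonos bin then
    (\<Sum>p\<in>Poly_Mapping.keys g1. \<Sum>q\<in>Poly_Mapping.keys g2.
      Poly_Mapping.lookup g1 p * Poly_Mapping.lookup g2 q * Poly_Mapping.lookup (delta_mono h :: _ \<Rightarrow>\<^sub>0 'k) (p, q)) else 0)" for h
  have eq: "shuffle bin g1 g2 = Abs_poly_mapping F"
    unfolding shuffle_def F_def Delta_single1 pairing_tensor ..
  define Nb where "Nb = (\<Sum>p\<in>Poly_Mapping.keys g1. mdeg p) + (\<Sum>q\<in>Poly_Mapping.keys g2. mdeg q)"
  define L where "L = (\<Union>p\<in>Poly_Mapping.keys g1. mlabels p) \<union> (\<Union>q\<in>Poly_Mapping.keys g2. mlabels q)"
  have finL: "finite L" unfolding L_def by (simp add: finite_mlabels)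
  have fin: "finite {h. F h \<noteq> 0}"
  proof (rule finite_subset)
    show "{h. F h \<noteq> 0} \<subseteq> insert None (Some ` {t. reduced t \<and> nleaves t \<le> Nb \<and> labels t \<subseteq> L})"
    proof
      fix h assume "h \<in> {h. F h \<noteq> 0}"
      then have hA: "h \<in> Amonos bin" and nz: "(\<Sum>p\<in>Poly_Mapping.keys g1. \<Sum>q\<in>Poly_Mapping.keys g2.
      Poly_Mapping.lookup g1 p * Poly_Mapping.lookup g2 q * Poly_Mapping.lookup (delta_mono h :: _ \<Rightarrow>\<^sub>0 'k) (p, q)) \<noteq> 0"
        by (auto simp: F_def split: if_splits)
      show "h \<in> insert None (Some ` {t. reduced t \<and> nleaves t \<le> Nb \<and> labels t \<subseteq> L})"
      proof (cases h)
        case None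
        then show ?thesis by simp
      next
        case (Some t)
        obtain p where p: "p \<in> Poly_Mapping.keys g1" and "(\<Sum>q\<in>Poly_Mapping.keys g2.
            Poly_Mapping.lookup g1 p * Poly_Mapping.lookup g2 q * Poly_Mapping.lookup (delta_mono h :: _ \<Rightarrow>\<^sub>0 'k) (p, q)) \<noteq> 0"
          using sum.not_neutral_contains_not_neutral[OF nz] by blast
        then obtain q where q: "q \<in> Poly_Mapping.keys g2"
          "Poly_Mapping.lookup g1 p * Poly_Mapping.lookup g2 q * Poly_Mapping.lookup (delta_mono h :: _ \<Rightarrow>\<^sub>0 'k) (p, q) \<noteq> 0"
          using sum.not_neutral_contains_not_neutral by blast
        then have k: "(p, q) \<in> Poly_Mapping.keys (delta t :: _ \<Rightarrow>\<^sub>0 'k)"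
          by (auto simp: in_keys_iff delta_mono_def Some)
        have P: "if bin then binary t else reduced t" using hA Some by (simp add: Amonos_iff)
        have D: "mdeg p + mdeg q = nleaves t \<and> mlabels p \<union> mlabels q = labels t"
          using delta_keys[OF P k] by blast
        have "mdeg p \<le> (\<Sum>p\<in>Poly_Mapping.keys g1. mdeg p)" using p by (intro member_le_sum) auto
        moreover have "mdeg q \<le> (\<Sum>q\<in>Poly_Mapping.keys g2. mdeg q)" using q by (intro member_le_sum) auto
        ultimately have "nleaves t \<le> Nb" using D unfolding Nb_def by linarith
        moreover have "labels t \<subseteq> L" using D p q unfolding L_def by auto
        moreover have "reduced t" using hA Some Amonos_reduced by blast
        ultimately show ?thesis using Some by auto
      qed
    qed
    show "finite (insert None (Some ` {t. reduced t \<and> nleaves t \<le> Nb \<and> labels t \<subseteq> L}))"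
      using finite_trees[OF finL] by simp
  qed
  show ?thesis unfolding eq lookup_Abs_poly_mapping[OF fin] F_def ..
qed

lemma sum_swap3: "(\<Sum>h\<in>A. \<Sum>p\<in>B. \<Sum>q\<in>C. X h p q) = (\<Sum>p\<in>B. \<Sum>q\<in>C. \<Sum>h\<in>A. X h p q)"
  by (subst sum.swap) (rule sum.cong[OF refl], rule sum.swap)

lemma pairing_shuffle:
  fixes f g1 g2 :: "'x mono \<Rightarrow>\<^sub>0 'k::comm_semiring_1"
  assumes "Poly_Mapping.keys f \<subseteq> Amonos bin"
  shows "pairing f (shuffle bin g1 g2) = (\<Sum>p\<in>Poly_Mapping.keys g1. \<Sum>q\<in>Poly_Mapping.keys g2.
     Poly_Mapping.lookup g1 p * Poly_Mapping.lookup g2 q * Poly_Mapping.lookup (Delta f) (p, q))"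
proof -
  have "pairing f (shuffle bin g1 g2) = (\<Sum>h\<in>Poly_Mapping.keys f. \<Sum>p\<in>Poly_Mapping.keys g1. \<Sum>q\<in>Poly_Mapping.keys g2.
     Poly_Mapping.lookup f h * (Poly_Mapping.lookup g1 p * Poly_Mapping.lookup g2 q * Poly_Mapping.lookup (delta_mono h) (p, q)))"
    unfolding pairing_def shuffle_lookup using assms by (intro sum.cong refl) (auto simp: sum_distrib_left)
  also have "\<dots> = (\<Sum>p\<in>Poly_Mapping.keys g1. \<Sum>q\<in>Poly_Mapping.keys g2. \<Sum>h\<in>Poly_Mapping.keys f.
     Poly_Mapping.lookup f h * (Poly_Mapping.lookup g1 p * Poly_Mapping.lookup g2 q * Poly_Mapping.lookup (delta_mono h) (p, q)))"
    by (rule sum_swap3)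
  also have "\<dots> = (\<Sum>p\<in>Poly_Mapping.keys g1. \<Sum>q\<in>Poly_Mapping.keys g2.
     Poly_Mapping.lookup g1 p * Poly_Mapping.lookup g2 q * Poly_Mapping.lookup (Delta f) (p, q))"
    unfolding Delta_lookup sum_distrib_left by (intro sum.cong refl) (simp add: mult_ac)
  finally show ?thesis .
qed

lemma dpartial_lookup: "Poly_Mapping.lookup (dpartial S f) U = Poly_Mapping.lookup (Delta f) (S, U)"
proof -
  have "{U. Poly_Mapping.lookup (Delta f) (S, U) \<noteq> 0} \<subseteq> snd ` Poly_Mapping.keys (Delta f)"
    by (force simp: in_keys_iff)
  then have "finite {U. Poly_Mapping.lookup (Delta f) (S, U) \<noteq> 0}"
    by (rule finite_subset) simp
  then show ?thesis unfolding dpartial_def by simp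
qed

lemma delta_mono_swap: "Poly_Mapping.lookup (delta_mono m :: _ \<Rightarrow>\<^sub>0 'k::comm_semiring_1) (a, b) = Poly_Mapping.lookup (delta_mono m :: _ \<Rightarrow>\<^sub>0 'k) (b, a)"
  by (cases m) (auto simp: delta_mono_def lookup_single when_def intro: delta_swap)

lemma Delta_swap: "Poly_Mapping.lookup (Delta f) (a, b) = Poly_Mapping.lookup (Delta f) (b, a)"
  unfolding Delta_lookup by (intro sum.cong refl) (simp add: delta_mono_swap[of _ a b])

lemma lookup_one_el: "Poly_Mapping.lookup (one_el :: 'x mono \<Rightarrow>\<^sub>0 'k::comm_semiring_1) q = (if q = None then 1 else 0)"
  by (auto simp: lookup_single when_def)

theorem proposition4p7p1:
  fixes bin :: bool and n :: nat
    and f :: "('x::countable) mono \<Rightarrow>\<^sub>0 'k::field_char_0"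
  assumes "1 \<le> n" and "homog bin n f"
  shows "(primitive f \<longrightarrow>
            (\<forall>g1 g2 d1 d2. 1 \<le> d1 \<longrightarrow> 1 \<le> d2 \<longrightarrow> homog bin d1 g1 \<longrightarrow> homog bin d2 g2 \<longrightarrow>
               pairing f (shuffle bin g1 g2) = 0))
       \<and> (\<forall>S k. S \<in> Amonos bin \<longrightarrow> mdeg S = k \<longrightarrow> 1 \<le> k \<longrightarrow> k \<le> n - 1 \<longrightarrow>
            (dpartial S f = 0 \<longleftrightarrow>
              (\<forall>g. homog bin (n - k) g \<longrightarrow> pairing f (shuffle bin (Poly_Mapping.single S 1) g) = 0)))
       \<and> ((\<forall>S T k. S \<in> Amonos bin \<longrightarrow> T \<in> Amonos bin \<longrightarrow> mdeg S = k \<longrightarrow> mdeg T = n - k \<longrightarrow>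
              1 \<le> k \<longrightarrow> 2 * k < n + 1 \<longrightarrow>
              pairing f (shuffle bin (Poly_Mapping.single S 1) (Poly_Mapping.single T 1)) = 0)
            \<longrightarrow> primitive f)"
proof -
  have hA: "Poly_Mapping.keys f \<subseteq> Amonos bin" and hdeg: "\<And>m. m \<in> Poly_Mapping.keys f \<Longrightarrow> mdeg m = n"
    using assms(2) unfolding homog_def by auto
  have fNone: "Poly_Mapping.lookup f None = 0"
    using hdeg[of None] assms(1) by (auto simp: in_keys_iff mdeg_def)
  have keysP: "\<exists>t. m = Some t \<and> (if bin then binary t else reduced t) \<and> reduced t \<and> nleaves t = n"
    if m: "m \<in> Poly_Mapping.keys f" for m
  proof -
    have "m \<noteq> None" using m fNone by (metis in_keys_iff)
    then obtain t where t: "m = Some t" by auto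
    have "Some t \<in> Amonos bin" using hA m t by auto
    then have "(if bin then binary t else reduced t)" "reduced t"
      using Amonos_reduced[of t bin] unfolding Amonos_iff by auto
    then show ?thesis using t hdeg[OF m] by (auto simp: mdeg_def)
  qed
  have DK: "a \<in> Amonos bin \<and> b \<in> Amonos bin \<and> mdeg a + mdeg b = n"
    if nz: "Poly_Mapping.lookup (Delta f) (a, b) \<noteq> 0" for a b
  proof -
    obtain m where m: "m \<in> Poly_Mapping.keys f" "Poly_Mapping.lookup f m * Poly_Mapping.lookup (delta_mono m) (a, b) \<noteq> 0"
      using sum.not_neutral_contains_not_neutral[OF nz[unfolded Delta_lookup]] by blast
    obtain t where t: "m = Some t" "if bin then binary t else reduced t" "nleaves t = n" using keysP[OF m(1)] by blast
    have "(a, b) \<in> Poly_Mapping.keys (delta t :: _ \<Rightarrow>\<^sub>0 'k)" using m(2) t(1) by (auto simp: in_keys_iff delta_mono_def)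
    then show ?thesis using delta_keys[OF t(2)] t(3) by blast
  qed
  have Dcounit: "Poly_Mapping.lookup (Delta f) (a, None) = Poly_Mapping.lookup f a" for a
  proof -
    have "Poly_Mapping.lookup (Delta f) (a, None) = (\<Sum>m\<in>Poly_Mapping.keys f. if m = a then Poly_Mapping.lookup f m else 0)"
      unfolding Delta_lookup
    proof (intro sum.cong refl)
      fix m assume m: "m \<in> Poly_Mapping.keys f"
      obtain t where t: "m = Some t" "reduced t" using keysP[OF m] by blast
      show "Poly_Mapping.lookup f m * Poly_Mapping.lookup (delta_mono m) (a, None) = (if m = a then Poly_Mapping.lookup f m else 0)"
        using t by (auto simp: delta_mono_def delta_counit)
    qed
    also have "\<dots> = Poly_Mapping.lookup f a" by (simp add: sum.delta' in_keys_iff)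
    finally show ?thesis .
  qed
  have Dcounit2: "Poly_Mapping.lookup (Delta f) (None, b) = Poly_Mapping.lookup f b" for b
    using Dcounit[of b] Delta_swap[of f None b] by simp
  have KI1: "pairing f (shuffle bin (Poly_Mapping.single S 1) g) =
      (\<Sum>q\<in>Poly_Mapping.keys g. Poly_Mapping.lookup g q * Poly_Mapping.lookup (Delta f) (S, q))" for S g
    unfolding pairing_shuffle[OF hA] by simp
  have KI2: "pairing f (shuffle bin (Poly_Mapping.single S 1) (Poly_Mapping.single T 1)) =
      Poly_Mapping.lookup (Delta f) (S, T)" for S T
    unfolding KI1 by simp
  have P1: "pairing f (shuffle bin g1 g2) = 0"
    if prim: "primitive f" and d: "1 \<le> d1" "1 \<le> d2" "homog bin d1 g1" "homog bin d2 g2" for g1 g2 d1 d2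
  proof -
    have nn1: "p \<noteq> None" if "p \<in> Poly_Mapping.keys g1" for p
      using d that unfolding homog_def by (metis mdeg_def not_one_le_zero option.simps(4))
    have nn2: "q \<noteq> None" if "q \<in> Poly_Mapping.keys g2" for q
      using d that unfolding homog_def by (metis mdeg_def not_one_le_zero option.simps(4))
    show ?thesis unfolding pairing_shuffle[OF hA]
      using prim nn1 nn2 by (intro sum.neutral ballI) (auto simp: primitive_def lookup_add tensor_lookup lookup_one_el)
  qed
  have P2: "dpartial S f = 0 \<longleftrightarrow>
              (\<forall>g. homog bin (n - k) g \<longrightarrow> pairing f (shuffle bin (Poly_Mapping.single S 1) g) = 0)"
    if S: "S \<in> Amonos bin" "mdeg S = k" "1 \<le> k" "k \<le> n - 1" for S k
  proof
    assume "dpartial S f = 0"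
    then have "\<And>U. Poly_Mapping.lookup (Delta f) (S, U) = 0"
      by (metis dpartial_lookup lookup_zero)
    then show "\<forall>g. homog bin (n - k) g \<longrightarrow> pairing f (shuffle bin (Poly_Mapping.single S 1) g) = 0"
      unfolding KI1 by simp
  next
    assume H: "\<forall>g. homog bin (n - k) g \<longrightarrow> pairing f (shuffle bin (Poly_Mapping.single S 1) g) = 0"
    show "dpartial S f = 0"
    proof (rule poly_mapping_eqI)
      fix U
      show "Poly_Mapping.lookup (dpartial S f) U = Poly_Mapping.lookup 0 U"
      proof (rule ccontr)
        assume "Poly_Mapping.lookup (dpartial S f) U \<noteq> Poly_Mapping.lookup 0 U"
        then have nz: "Poly_Mapping.lookup (Delta f) (S, U) \<noteq> 0" by (simp add: dpartial_lookup)
        then have "U \<in> Amonos bin" "mdeg U = n - k" using DK[OF nz] S by auto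
        then have "homog bin (n - k) (Poly_Mapping.single U (1::'k))" by (simp add: homog_def)
        then have "pairing f (shuffle bin (Poly_Mapping.single S 1) (Poly_Mapping.single U 1)) = 0" using H by blast
        then show False using nz KI2 by simp
      qed
    qed
  qed
  have P3: "primitive f"
    if H: "\<forall>S T k. S \<in> Amonos bin \<longrightarrow> T \<in> Amonos bin \<longrightarrow> mdeg S = k \<longrightarrow> mdeg T = n - k \<longrightarrow>
              1 \<le> k \<longrightarrow> 2 * k < n + 1 \<longrightarrow>
              pairing f (shuffle bin (Poly_Mapping.single S 1) (Poly_Mapping.single T 1)) = 0"
  proof -
    have H': "Poly_Mapping.lookup (Delta f) (S, T) = 0"
      if "S \<in> Amonos bin" "T \<in> Amonos bin" "mdeg S + mdeg T = n" "1 \<le> mdeg S" "2 * mdeg S < n + 1" for S T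
      using H[rule_format, of S T "mdeg S"] that KI2 by auto
    show ?thesis unfolding primitive_def
    proof (rule poly_mapping_eqI)
      fix ab :: "'x mono \<times> 'x mono"
      obtain a b where ab: "ab = (a, b)" by (cases ab)
      show "Poly_Mapping.lookup (Delta f) ab = Poly_Mapping.lookup (tensor f one_el + tensor one_el f) ab"
      proof (cases "b = None")
        case True
        then show ?thesis using ab fNone Dcounit by (auto simp: lookup_add tensor_lookup lookup_one_el)
      next
        case bN: False
        show ?thesis
        proof (cases "a = None")
          case True
          then show ?thesis using ab bN Dcounit2 by (auto simp: lookup_add tensor_lookup lookup_one_el)
        next
          case aN: False
          have "Poly_Mapping.lookup (Delta f) (a, b) = 0"
          proof (rule ccontr)
            assume nz: "Poly_Mapping.lookup (Delta f) (a, b) \<noteq> 0"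
            have A: "a \<in> Amonos bin" "b \<in> Amonos bin" "mdeg a + mdeg b = n" using DK[OF nz] by auto
            have "1 \<le> mdeg a" using A(1) aN nleaves_pos Amonos_reduced by (cases a) (auto simp: mdeg_def)
            moreover have "1 \<le> mdeg b" using A(2) bN nleaves_pos Amonos_reduced by (cases b) (auto simp: mdeg_def)
            ultimately show False
            proof (cases "2 * mdeg a < n + 1")
              case True
              then show False using H'[OF A(1,2,3)] nz \<open>1 \<le> mdeg a\<close> by simp
            next
              case False
              then have "2 * mdeg b < n + 1" using A(3) by linarith
              then have "Poly_Mapping.lookup (Delta f) (b, a) = 0" using H'[OF A(2,1)] A(3) \<open>1 \<le> mdeg b\<close> by simp
              then show False using nz Delta_swap[of f a b] by simp
            qed
          qed
          then show ?thesis using ab aN bN by (auto simp: lookup_add tensor_lookup lookup_one_el)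
        qed
      qed
    qed
  qed
  show ?thesis using P1 P2 P3 by blast
qed

end
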